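(* Assume that $\mathcal P$ is proper and let $F\subset\mathcal P$ be closed. Let $\rho:\mathcal P\to[0,\infty]$ be lower semicontinuous with $\rho\ge c$ in $\mathcal P\setminus F$ for some constant $c>0$. Define $$u(x)=\min\Big\{1,\inf_\gamma\int_\gamma\rho\,ds\Big\},\qquad x\in\mathcal P,$$ where the infimum is taken over all rectifiable curves (including constant ones) connecting $x$ to $F$. Then $u$ is lower semicontinuous, $u=0$ on $F$, and $\rho\chi_{\mathcal P\setminus F}$ is an upper gradient of $u$.
   Context: $\mathcal P=(\mathcal P,d,\mu)$ is a metric space (with a positive complete Borel measure $\mu$ with $0<\mu(B)<\infty$ for every ball $B$); proper means all closed balls are compact. Rectifiable curves are parametrized by arc length. A Borel $g:\mathcal P\to[0,\infty]$ is an upper gradient of $u:\mathcal P\to[-\infty,\infty]$ if $|u(\gamma(0))-u(\gamma(l_\gamma))|\le\int_\gamma g\,ds$ for every nonconstant rectifiable curve $\gamma:[0,l_\gamma]\to\mathcal P$. *)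

theory Defs
  imports "HOL-Analysis.Analysis"
begin

definition lower_semicont :: "('a::topological_space \<Rightarrow> 'b::linorder_topology) \<Rightarrow> bool" where
  "lower_semicont f \<longleftrightarrow> (\<forall>t. open {x. t < f x})"

definition proper_space :: "'a::metric_space itself \<Rightarrow> bool" where
  "proper_space _ \<longleftrightarrow> (\<forall>(x::'a) r. compact (cball x r))"

definition curve_length :: "(real \<Rightarrow> 'a::metric_space) \<Rightarrow> real \<Rightarrow> real \<Rightarrow> ennreal" where
  "curve_length \<gamma> a b =
     (SUP (t, n) \<in> {(t, n). t 0 = a \<and> t n = b \<and> (\<forall>i<n. t i \<le> t (Suc i))}.
        ennreal (\<Sum>i<n. dist (\<gamma> (t i)) (\<gamma> (t (Suc i)))))"

text \<open>A rectifiable curve \<gamma> : [0,l] \<rightarrow> P parametrized by arc length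
  (l = 0 gives the constant curves).\<close>
definition arclength_curve :: "(real \<Rightarrow> 'a::metric_space) \<Rightarrow> real \<Rightarrow> bool" where
  "arclength_curve \<gamma> l \<longleftrightarrow> 0 \<le> l \<and> continuous_on {0..l} \<gamma> \<and>
     (\<forall>s t. 0 \<le> s \<longrightarrow> s \<le> t \<longrightarrow> t \<le> l \<longrightarrow> curve_length \<gamma> s t = ennreal (t - s))"

definition line_integral :: "('a::metric_space \<Rightarrow> ennreal) \<Rightarrow> (real \<Rightarrow> 'a) \<Rightarrow> real \<Rightarrow> ennreal" where
  "line_integral g \<gamma> l = (\<integral>\<^sup>+ t \<in> {0..l}. g (\<gamma> t) \<partial>lborel)"

text \<open>Upper gradient (with the usual convention that the integral must be infinite
  whenever one of the endpoint values is infinite).\<close>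
definition upper_gradient :: "('a::metric_space \<Rightarrow> ennreal) \<Rightarrow> ('a \<Rightarrow> ereal) \<Rightarrow> bool" where
  "upper_gradient g u \<longleftrightarrow> g \<in> borel_measurable borel \<and>
     (\<forall>\<gamma> l. arclength_curve \<gamma> l \<and> 0 < l \<longrightarrow>
        (if \<bar>u (\<gamma> 0)\<bar> \<noteq> \<infinity> \<and> \<bar>u (\<gamma> l)\<bar> \<noteq> \<infinity>
         then \<bar>u (\<gamma> 0) - u (\<gamma> l)\<bar> \<le> enn2ereal (line_integral g \<gamma> l)
         else line_integral g \<gamma> l = \<infinity>))"

end

theory Submission
  imports Defs "HOL-Complex_Analysis.Great_Picard"
begin


definition psum :: "(real \<Rightarrow> 'a::metric_space) \<Rightarrow> (nat \<Rightarrow> real) \<Rightarrow> nat \<Rightarrow> real" where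
  "psum \<gamma> t n = (\<Sum>i<n. dist (\<gamma> (t i)) (\<gamma> (t (Suc i))))"

definition parts :: "real \<Rightarrow> real \<Rightarrow> ((nat \<Rightarrow> real) \<times> nat) set" where
  "parts a b = {(t,n). t 0 = a \<and> t n = b \<and> (\<forall>i<n. t i \<le> t (Suc i))}"

lemma CL_eq: "curve_length \<gamma> a b = (SUP (t,n) \<in> parts a b. ennreal (psum \<gamma> t n))"
  by (simp add: curve_length_def parts_def psum_def)

lemma parts_mono:
  assumes "(t,n) \<in> parts a b" "j \<le> i" "i \<le> n" shows "t j \<le> t i"
  using assms(2,3)
proof (induction i)
  case 0 then show ?case by simp
next
  case (Suc i)
  show ?case
  proof (cases "j = Suc i")
    case False
    then have "t j \<le> t i" using Suc by simp
    also have "t i \<le> t (Suc i)" using assms(1) Suc.prems by (auto simp: parts_def)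
    finally show ?thesis .
  qed simp
qed

lemma parts_bounds:
  assumes "(t,n) \<in> parts a b" "i \<le> n" shows "a \<le> t i" "t i \<le> b"
  using parts_mono[OF assms(1), of 0 i] parts_mono[OF assms(1), of i n] assms
  by (auto simp: parts_def)

lemma parts_le: "(t,n) \<in> parts a b \<Longrightarrow> a \<le> b"
  using parts_bounds(1)[of t n a b n] by (auto simp: parts_def)

lemma parts_cons:
  assumes "(t,n) \<in> parts q b" "p \<le> q"
  shows "(case_nat p t, Suc n) \<in> parts p b"
  using assms by (auto simp: parts_def less_Suc_eq_0_disj)

lemma psum_cons: "psum \<gamma> (case_nat p t) (Suc n) = dist (\<gamma> p) (\<gamma> (t 0)) + psum \<gamma> t n"
  unfolding psum_def by (subst sum.lessThan_Suc_shift) simp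

lemma parts_tail:
  assumes "(t, Suc n) \<in> parts a b"
  shows "(t \<circ> Suc, n) \<in> parts (t 1) b" "a \<le> t 1"
  using assms by (auto simp: parts_def)

lemma psum_tail: "psum \<gamma> t (Suc n) = dist (\<gamma> (t 0)) (\<gamma> (t 1)) + psum \<gamma> (t \<circ> Suc) n"
  unfolding psum_def by (subst sum.lessThan_Suc_shift) simp

lemma psum_nonneg: "0 \<le> psum \<gamma> t n"
  unfolding psum_def by (simp add: sum_nonneg)

lemma parts_two: "a \<le> b \<Longrightarrow> (case_nat a (\<lambda>_. b), 1) \<in> parts a b"
  by (auto simp: parts_def)

lemma CL_upper: "(t,n) \<in> parts a b \<Longrightarrow> ennreal (psum \<gamma> t n) \<le> curve_length \<gamma> a b"
  unfolding CL_eq by (rule SUP_upper2) auto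

lemma CL_dist: "a \<le> b \<Longrightarrow> ennreal (dist (\<gamma> a) (\<gamma> b)) \<le> curve_length \<gamma> a b"
  using CL_upper[OF parts_two, of a b \<gamma>] by (simp add: psum_def)

lemma CL_cons:
  assumes "p \<le> q" "q \<le> b"
  shows "ennreal (dist (\<gamma> p) (\<gamma> q)) + curve_length \<gamma> q b \<le> curve_length \<gamma> p b"
proof -
  have ne: "parts q b \<noteq> {}" using parts_two[OF assms(2)] by blast
  have "ennreal (dist (\<gamma> p) (\<gamma> q)) + curve_length \<gamma> q b
      = (SUP x \<in> parts q b. (case x of (t,n) \<Rightarrow> ennreal (psum \<gamma> t n)) + ennreal (dist (\<gamma> p) (\<gamma> q)))"
    unfolding CL_eq by (subst ennreal_SUP_add_left[OF ne]) (simp add: add.commute)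
  also have "\<dots> \<le> curve_length \<gamma> p b"
  proof (rule SUP_least, clarify)
    fix t n assume tn: "(t,n) \<in> parts q b"
    then have "t 0 = q" by (simp add: parts_def)
    have "ennreal (psum \<gamma> t n) + ennreal (dist (\<gamma> p) (\<gamma> q)) = ennreal (psum \<gamma> (case_nat p t) (Suc n))"
      by (simp add: psum_cons \<open>t 0 = q\<close> psum_nonneg ennreal_plus[symmetric] add.commute del: ennreal_plus)
    also have "\<dots> \<le> curve_length \<gamma> p b"
      by (rule CL_upper[OF parts_cons[OF tn assms(1)]])
    finally show "ennreal (psum \<gamma> t n) + ennreal (dist (\<gamma> p) (\<gamma> q)) \<le> curve_length \<gamma> p b" .
  qed
  finally show ?thesis .
qed

lemma CL_super_aux:
  "(t,n) \<in> parts a b \<Longrightarrow> b \<le> c \<Longrightarrow> ennreal (psum \<gamma> t n) + curve_length \<gamma> b c \<le> curve_length \<gamma> a c"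
proof (induction n arbitrary: t a)
  case 0
  then have "a = b" by (simp add: parts_def)
  then show ?case by (simp add: psum_def)
next
  case (Suc n)
  have t0: "t 0 = a" using Suc.prems by (simp add: parts_def)
  have tl: "(t \<circ> Suc, n) \<in> parts (t 1) b" "a \<le> t 1" using parts_tail[OF Suc.prems(1)] by auto
  have t1b: "t 1 \<le> b" using parts_le[OF tl(1)] .
  have IH: "ennreal (psum \<gamma> (t \<circ> Suc) n) + curve_length \<gamma> b c \<le> curve_length \<gamma> (t 1) c"
    using Suc.IH[OF tl(1) Suc.prems(2)] .
  have "ennreal (psum \<gamma> t (Suc n)) + curve_length \<gamma> b c
      = ennreal (dist (\<gamma> a) (\<gamma> (t 1))) + (ennreal (psum \<gamma> (t \<circ> Suc) n) + curve_length \<gamma> b c)"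
    by (simp add: psum_tail t0 psum_nonneg ennreal_plus[symmetric] add.assoc del: ennreal_plus)
  also have "\<dots> \<le> ennreal (dist (\<gamma> a) (\<gamma> (t 1))) + curve_length \<gamma> (t 1) c"
    using IH by (rule add_left_mono)
  also have "\<dots> \<le> curve_length \<gamma> a c"
    using CL_cons[OF tl(2), of c \<gamma>] t1b Suc.prems(2) by simp
  finally show ?case .
qed

lemma CL_super:
  assumes "a \<le> b" "b \<le> c"
  shows "curve_length \<gamma> a b + curve_length \<gamma> b c \<le> curve_length \<gamma> a c"
proof -
  have ne: "parts a b \<noteq> {}" using parts_two[OF assms(1)] by blast
  have "curve_length \<gamma> a b + curve_length \<gamma> b c
     = (SUP x \<in> parts a b. (case x of (t,n) \<Rightarrow> ennreal (psum \<gamma> t n)) + curve_length \<gamma> b c)"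
    unfolding CL_eq[of \<gamma> a b] by (subst ennreal_SUP_add_left[OF ne]) simp
  also have "\<dots> \<le> curve_length \<gamma> a c"
    by (rule SUP_least, clarify, rule CL_super_aux[OF _ assms(2)])
  finally show ?thesis .
qed

lemma CL_sub_aux:
  "(t,n) \<in> parts a c \<Longrightarrow> a \<le> b \<Longrightarrow> b \<le> c \<Longrightarrow>
     ennreal (psum \<gamma> t n) \<le> curve_length \<gamma> a b + curve_length \<gamma> b c"
proof (induction n arbitrary: t a)
  case 0
  then have "a = c" by (simp add: parts_def)
  then show ?case by (simp add: psum_def)
next
  case (Suc n)
  have t0: "t 0 = a" using Suc.prems by (simp add: parts_def)
  have tl: "(t \<circ> Suc, n) \<in> parts (t 1) c" "a \<le> t 1" using parts_tail[OF Suc.prems(1)] by auto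
  have eq: "ennreal (psum \<gamma> t (Suc n)) = ennreal (dist (\<gamma> a) (\<gamma> (t 1))) + ennreal (psum \<gamma> (t \<circ> Suc) n)"
    by (simp add: psum_tail t0 psum_nonneg ennreal_plus[symmetric] del: ennreal_plus)
  show ?case
  proof (cases "t 1 \<le> b")
    case True
    have IH: "ennreal (psum \<gamma> (t \<circ> Suc) n) \<le> curve_length \<gamma> (t 1) b + curve_length \<gamma> b c"
      using Suc.IH[OF tl(1) True Suc.prems(3)] .
    have "ennreal (psum \<gamma> t (Suc n)) \<le> ennreal (dist (\<gamma> a) (\<gamma> (t 1))) + (curve_length \<gamma> (t 1) b + curve_length \<gamma> b c)"
      unfolding eq using IH by (rule add_left_mono)
    also have "\<dots> = (ennreal (dist (\<gamma> a) (\<gamma> (t 1))) + curve_length \<gamma> (t 1) b) + curve_length \<gamma> b c"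
      by (simp add: add.assoc)
    also have "\<dots> \<le> curve_length \<gamma> a b + curve_length \<gamma> b c"
      using CL_cons[OF tl(2) True] by (rule add_right_mono)
    finally show ?thesis .
  next
    case False
    have p2: "(case_nat b (t \<circ> Suc), Suc n) \<in> parts b c"
      using parts_cons[OF tl(1), of b] False by simp
    have "dist (\<gamma> a) (\<gamma> (t 1)) + psum \<gamma> (t \<circ> Suc) n \<le> dist (\<gamma> a) (\<gamma> b) + (dist (\<gamma> b) (\<gamma> (t 1)) + psum \<gamma> (t \<circ> Suc) n)"
      using dist_triangle[of "\<gamma> a" "\<gamma> (t 1)" "\<gamma> b"] by simp
    also have "\<dots> = dist (\<gamma> a) (\<gamma> b) + psum \<gamma> (case_nat b (t \<circ> Suc)) (Suc n)"
      by (simp add: psum_cons)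
    finally have le: "ennreal (psum \<gamma> t (Suc n)) \<le> ennreal (dist (\<gamma> a) (\<gamma> b)) + ennreal (psum \<gamma> (case_nat b (t \<circ> Suc)) (Suc n))"
      unfolding eq by (simp add: psum_nonneg ennreal_plus[symmetric] ennreal_leI del: ennreal_plus)
    also have "\<dots> \<le> curve_length \<gamma> a b + curve_length \<gamma> b c"
      by (rule add_mono[OF CL_dist[OF Suc.prems(2)] CL_upper[OF p2]])
    finally show ?thesis .
  qed
qed

lemma CL_sub:
  assumes "a \<le> b" "b \<le> c"
  shows "curve_length \<gamma> a c \<le> curve_length \<gamma> a b + curve_length \<gamma> b c"
  unfolding CL_eq[of \<gamma> a c]
  by (rule SUP_least, clarify, rule CL_sub_aux[OF _ assms])

lemma CL_add:
  assumes "a \<le> b" "b \<le> c"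
  shows "curve_length \<gamma> a c = curve_length \<gamma> a b + curve_length \<gamma> b c"
  using CL_sub[OF assms] CL_super[OF assms] by (rule antisym)

lemma CL_lip:
  assumes "\<And>x y. x \<in> {a..b} \<Longrightarrow> y \<in> {a..b} \<Longrightarrow> dist (\<gamma> x) (\<gamma> y) \<le> \<bar>x - y\<bar>"
  shows "curve_length \<gamma> a b \<le> ennreal (b - a)"
  unfolding CL_eq
proof (rule SUP_least, clarify)
  fix t n assume tn: "(t,n) \<in> parts a b"
  have "psum \<gamma> t n \<le> (\<Sum>i<n. t (Suc i) - t i)"
    unfolding psum_def
  proof (rule sum_mono)
    fix i assume "i \<in> {..<n}"
    then have i: "i < n" by simp
    have "t i \<le> t (Suc i)" using tn i by (auto simp: parts_def)
    moreover have "t i \<in> {a..b}" "t (Suc i) \<in> {a..b}" using parts_bounds[OF tn] i by auto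
    ultimately show "dist (\<gamma> (t i)) (\<gamma> (t (Suc i))) \<le> t (Suc i) - t i"
      using assms[of "t i" "t (Suc i)"] by simp
  qed
  also have "\<dots> = b - a" using tn by (simp add: sum_lessThan_telescope parts_def)
  finally show "ennreal (psum \<gamma> t n) \<le> ennreal (b - a)" by (rule ennreal_leI)
qed

lemma CL_reparam:
  assumes mono: "\<And>x y. a \<le> x \<Longrightarrow> x \<le> y \<Longrightarrow> y \<le> b \<Longrightarrow> \<phi> x \<le> \<phi> y"
    and "\<phi> a = c" "\<phi> b = d"
    and eq: "\<And>t. t \<in> {a..b} \<Longrightarrow> \<gamma>2 (\<phi> t) = \<gamma>1 t"
  shows "curve_length \<gamma>1 a b \<le> curve_length \<gamma>2 c d"
  unfolding CL_eq[of \<gamma>1]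
proof (rule SUP_least, clarify)
  fix t n assume tn: "(t,n) \<in> parts a b"
  have p: "(\<phi> \<circ> t, n) \<in> parts c d"
    using tn assms parts_bounds[OF tn] by (auto simp: parts_def intro!: mono)
  have "psum \<gamma>1 t n = psum \<gamma>2 (\<phi> \<circ> t) n"
    unfolding psum_def
    by (rule sum.cong) (use parts_bounds[OF tn] in \<open>auto simp: eq\<close>)
  then show "ennreal (psum \<gamma>1 t n) \<le> curve_length \<gamma>2 c d"
    using CL_upper[OF p] by simp
qed



lemma lip_image_measure_le:
  fixes f :: "real \<Rightarrow> real"
  assumes lip: "\<And>x y. \<bar>f x - f y\<bar> \<le> \<bar>x - y\<bar>"
    and S: "S \<in> sets lebesgue" "bounded S" and fS: "f ` S \<in> sets lebesgue"
  shows "measure lebesgue (f ` S) \<le> measure lebesgue S"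
proof -
  have Slm: "S \<in> lmeasurable" using S by (simp add: bounded_set_imp_lmeasurable)
  have cont: "continuous_on A f" for A
    unfolding continuous_on_iff
  proof (intro ballI allI impI)
    fix x e assume "(e::real) > 0"
    then show "\<exists>d>0. \<forall>x'\<in>A. dist x' x < d \<longrightarrow> dist (f x') (f x) < e"
      by (intro exI[of _ e]) (auto simp: dist_real_def intro: le_less_trans[OF lip])
  qed
  obtain B where B: "\<And>x. x \<in> S \<Longrightarrow> \<bar>x\<bar> \<le> B" using S(2) bounded_iff by force
  have "bounded (f ` S)"
    unfolding bounded_iff
  proof (intro exI ballI)
    fix y assume "y \<in> f ` S"
    then obtain x where x: "x \<in> S" "y = f x" by auto
    have "\<bar>f x - f 0\<bar> \<le> \<bar>x\<bar>" using lip[of x 0] by simp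
    then show "norm y \<le> \<bar>f 0\<bar> + B" using B[OF x(1)] x by simp
  qed
  then have fSm: "f ` S \<in> lmeasurable" using fS by (simp add: bounded_set_imp_lmeasurable)
  show ?thesis
  proof (rule field_le_epsilon)
    fix e :: real assume "e > 0"
    obtain T where T: "open T" "S \<subseteq> T" "(T - S) \<in> lmeasurable" "emeasure lebesgue (T - S) < ennreal e"
      using sets_lebesgue_outer_open[OF S(1) \<open>e > 0\<close>] by blast
    have Tm: "T \<in> lmeasurable"
      using Slm T fmeasurable_Diff_D by blast
    have "measure lebesgue (T - S) < e"
      using T(4) \<open>e > 0\<close> by (simp add: emeasure_eq_measure2[OF T(3)] ennreal_less_iff)
    moreover have "measure lebesgue T = measure lebesgue S + measure lebesgue (T - S)"
      using measure_Diff[of lebesgue T S] Tm Slm T(2) by (auto simp: fmeasurable_def)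
    ultimately have Tle: "measure lebesgue T < measure lebesgue S + e" by simp
    have "\<forall>x. \<exists>r>0. x \<in> S \<longrightarrow> ball x r \<subseteq> T"
      using T(1,2) by (meson openE subsetD zero_less_one)
    then obtain R where R: "\<And>x. 0 < R x" "\<And>x. x \<in> S \<Longrightarrow> ball x (R x) \<subseteq> T"
      by metis
    have gaugeR: "gauge (\<lambda>x. ball x (R x))"
      using R(1) by (simp add: gauge_def)
    define c where "c = \<bar>B\<bar> + 1"
    have c: "S \<subseteq> cbox (-c) c" "box (-c) (c::real) \<noteq> {}"
      using B by (fastforce simp: c_def)+
    obtain \<D> where "countable \<D>"
       and Dsub: "\<Union>\<D> \<subseteq> cbox (-c) c"
       and cbox: "\<And>K. K \<in> \<D> \<Longrightarrow> interior K \<noteq> {} \<and> (\<exists>c d. K = cbox c d)"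
       and pw:   "pairwise (\<lambda>A B. interior A \<inter> interior B = {}) \<D>"
       and Ksub: "\<And>K. K \<in> \<D> \<Longrightarrow> \<exists>x \<in> S \<inter> K. K \<subseteq> (\<lambda>x. ball x (R x)) x"
       and "S \<subseteq> \<Union>\<D>"
      using covering_lemma [OF c gaugeR]  by force
    have KT: "K \<subseteq> T" if "K \<in> \<D>" for K
      using Ksub[OF that] R(2) by blast
    have fK: "f ` K \<in> lmeasurable \<and> measure lebesgue (f ` K) \<le> measure lebesgue K" if KD: "K \<in> \<D>" for K
    proof -
      obtain u v where K: "K = cbox u v" and ne: "interior K \<noteq> {}" using cbox[OF KD] by blast
      then have uv: "u \<le> v" by auto
      have Kc: "K = {u..v}" using K by simp
      have comp: "compact (f ` K)" using Kc cont compact_continuous_image by blast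
      have "K \<noteq> {}" using uv Kc by auto
      obtain x1 where x1: "x1 \<in> K" "\<And>y. y \<in> K \<Longrightarrow> f x1 \<le> f y"
        using continuous_attains_inf[of K f] \<open>K \<noteq> {}\<close> Kc cont by auto
      obtain x2 where x2: "x2 \<in> K" "\<And>y. y \<in> K \<Longrightarrow> f y \<le> f x2"
        using continuous_attains_sup[of K f] \<open>K \<noteq> {}\<close> Kc cont by auto
      have sub: "f ` K \<subseteq> {f x1..f x2}" using x1 x2 by auto
      have "measure lebesgue (f ` K) \<le> measure lebesgue {f x1..f x2}"
        using measure_mono_fmeasurable[OF sub fmeasurableD[OF lmeasurable_compact[OF comp]] lmeasurable_cbox[of "f x1" "f x2", unfolded cbox_interval]] .
      also have "\<dots> = f x2 - f x1" using x1 x2 by simp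
      also have "\<dots> \<le> \<bar>x2 - x1\<bar>" using lip[of x2 x1] by simp
      also have "\<dots> \<le> v - u" using x1(1) x2(1) unfolding Kc by (simp add: abs_le_iff)
      also have "\<dots> = measure lebesgue K" using Kc uv by simp
      finally show ?thesis using lmeasurable_compact[OF comp] by (intro conjI)
    qed
    have fKm: "f ` K \<in> lmeasurable" if "K \<in> \<D>" for K using fK[OF that] by (rule conjunct1)
    have fKle: "measure lebesgue (f ` K) \<le> measure lebesgue K" if "K \<in> \<D>" for K using fK[OF that] by (rule conjunct2)
    have bound: "measure lebesgue (\<Union>K\<in>\<D>'. f ` K) \<le> measure lebesgue T" if "\<D>' \<subseteq> \<D>" "finite \<D>'" for \<D>'
    proof -
      have "measure lebesgue (\<Union>K\<in>\<D>'. f ` K) \<le> (\<Sum>K\<in>\<D>'. measure lebesgue (f ` K))"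
        by (rule measure_UNION_le[OF \<open>finite \<D>'\<close>]) (use that fKm in blast)
      also have "\<dots> \<le> (\<Sum>K\<in>\<D>'. measure lebesgue K)"
        by (rule sum_mono) (use that fKle in blast)
      also have "\<dots> \<le> measure lebesgue T"
      proof -
        have "{} \<notin> \<D>'"
          using cbox \<open>\<D>' \<subseteq> \<D>\<close> interior_empty by blast
        have cb': "\<And>K. K \<in> \<D>' \<Longrightarrow> \<exists>a b. K = cbox a b"
          using cbox that by blast
        have pw': "pairwise (\<lambda>A B. interior A \<inter> interior B = {}) \<D>'"
          using pairwise_subset [OF pw \<open>\<D>' \<subseteq> \<D>\<close>] .
        have div: "\<D>' division_of \<Union>\<D>'"
        proof (rule division_ofI[OF \<open>finite \<D>'\<close> _ _ cb' _ refl])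
          show "\<And>K. K \<in> \<D>' \<Longrightarrow> K \<subseteq> \<Union> \<D>'" by blast
          show "\<And>K. K \<in> \<D>' \<Longrightarrow> K \<noteq> {}" using \<open>{} \<notin> \<D>'\<close> by blast
          show "\<And>K1 K2. K1 \<in> \<D>' \<Longrightarrow> K2 \<in> \<D>' \<Longrightarrow> K1 \<noteq> K2 \<Longrightarrow> interior K1 \<inter> interior K2 = {}"
            using pw' unfolding pairwise_def by blast
        qed
        have le_meaT: "measure lebesgue (\<Union>\<D>') \<le> measure lebesgue T"
        proof (rule measure_mono_fmeasurable)
          show "(\<Union>\<D>') \<in> sets lebesgue"
            using div lmeasurable_division by auto
          show "\<Union>\<D>' \<subseteq> T" using KT that by blast
          show "T \<in> lmeasurable" by (rule Tm)
        qed
        have "sum (measure lebesgue) \<D>' = sum (measure lborel) \<D>'"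
        proof (rule sum.cong[OF refl])
          fix K assume "K \<in> \<D>'"
          then obtain a b where "K = cbox a b" using cb' by blast
          then show "measure lebesgue K = measure lborel K" by simp
        qed
        then have "sum (measure lebesgue) \<D>' = measure lebesgue (\<Union>\<D>')"
          using content_division [OF div] by auto
        then show ?thesis using le_meaT by simp
      qed
      finally show ?thesis .
    qed
    have U1: "(\<Union>K\<in>\<D>. f ` K) \<in> lmeasurable"
      by (intro fmeasurable_UN_bound[OF \<open>countable \<D>\<close> fKm bound])
    have U2: "measure lebesgue (\<Union>K\<in>\<D>. f ` K) \<le> measure lebesgue T"
      by (intro measure_UN_bound[OF \<open>countable \<D>\<close> fKm bound])
    have "f ` S \<subseteq> (\<Union>K\<in>\<D>. f ` K)" using \<open>S \<subseteq> \<Union>\<D>\<close> by blast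
    then have "measure lebesgue (f ` S) \<le> measure lebesgue (\<Union>K\<in>\<D>. f ` K)"
      using measure_mono_fmeasurable[OF _ fmeasurableD[OF fSm] U1] by blast
    then show "measure lebesgue (f ` S) \<le> measure lebesgue S + e"
      using U2 Tle by linarith
  qed
qed



lemma lip_cont: 
  fixes s :: "real \<Rightarrow> real"
  assumes lip: "\<And>x y. \<bar>s x - s y\<bar> \<le> \<bar>x - y\<bar>"
  shows "continuous_on A s"
  unfolding continuous_on_iff
proof (intro ballI allI impI)
  fix x e assume "(e::real) > 0"
  then show "\<exists>d>0. \<forall>x'\<in>A. dist x' x < d \<longrightarrow> dist (s x') (s x) < e"
    by (intro exI[of _ e]) (auto simp: dist_real_def intro: le_less_trans[OF lip])
qed

lemma integral_reparam_le:
  fixes s :: "real \<Rightarrow> real" and f :: "real \<Rightarrow> ennreal"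
  assumes lip: "\<And>x y. \<bar>s x - s y\<bar> \<le> \<bar>x - y\<bar>"
    and mono: "mono s" and s0: "s 0 = 0" and sL: "s L = S" and L: "0 \<le> L"
    and f: "f \<in> borel_measurable borel"
  shows "(\<integral>\<^sup>+\<sigma>. f \<sigma> * indicator {0..S} \<sigma> \<partial>lborel) \<le> (\<integral>\<^sup>+t. f (s t) * indicator {0..L} t \<partial>lborel)"
proof -
  have cont: "continuous_on A s" for A by (rule lip_cont[OF lip])
  have smeas: "s \<in> borel_measurable borel"
    using cont[of UNIV] by (rule borel_measurable_continuous_onI)
  have key: "emeasure lborel (A \<inter> {0..S}) \<le> emeasure lborel (s -` A \<inter> {0..L})" if A: "A \<in> sets borel" for A
  proof -
    define B where "B = s -` A \<inter> {0..L}"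
    have Bb: "B \<in> sets borel" unfolding B_def using A smeas by (auto intro: measurable_sets_borel)
    have img: "s ` B = A \<inter> {0..S}"
    proof
      show "s ` B \<subseteq> A \<inter> {0..S}"
        using mono s0 sL by (auto simp: B_def mono_def) (metis s0)
      show "A \<inter> {0..S} \<subseteq> s ` B"
      proof
        fix y assume y: "y \<in> A \<inter> {0..S}"
        then obtain t where "0 \<le> t" "t \<le> L" "s t = y"
          using IVT'[of s 0 y L, OF _ _ L cont] s0 sL by auto
        then show "y \<in> s ` B" using y by (auto simp: B_def)
      qed
    qed
    have ABb: "A \<inter> {0..S} \<in> sets borel" using A by auto
    have Bl: "B \<in> lmeasurable" using Bb by (intro bounded_set_imp_lmeasurable) (auto simp: B_def bounded_Int bounded_closed_interval)
    have ASl: "A \<inter> {0..S} \<in> lmeasurable" using ABb by (intro bounded_set_imp_lmeasurable) (auto simp: bounded_Int bounded_closed_interval)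
    have "measure lebesgue (s ` B) \<le> measure lebesgue B"
      by (rule lip_image_measure_le[OF lip]) (use Bl ASl img in \<open>auto simp: B_def bounded_Int bounded_closed_interval\<close>)
    then have "measure lebesgue (A \<inter> {0..S}) \<le> measure lebesgue B" using img by simp
    then have "emeasure lebesgue (A \<inter> {0..S}) \<le> emeasure lebesgue B"
      using Bl ASl by (simp add: emeasure_eq_measure2 ennreal_leI)
    then show ?thesis using Bb ABb by (simp add: B_def)
  qed
  define M1 where "M1 = density lborel (indicator {0..S})"
  define M2 where "M2 = distr (density lborel (indicator {0..L})) borel s"
  have sets1: "sets M1 = sets borel" by (simp add: M1_def)
  have sets2: "sets M2 = sets borel" by (simp add: M2_def)
  have e1: "emeasure M1 A = emeasure lborel (A \<inter> {0..S})" if "A \<in> sets borel" for A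
  proof -
    have "emeasure M1 A = (\<integral>\<^sup>+x. indicator {0..S} x * indicator A x \<partial>lborel)"
      unfolding M1_def using that by (subst emeasure_density) auto
    also have "\<dots> = (\<integral>\<^sup>+x. indicator (A \<inter> {0..S}) x \<partial>lborel)"
      by (intro nn_integral_cong) (simp split: split_indicator)
    also have "\<dots> = emeasure lborel (A \<inter> {0..S})"
      using that by simp
    finally show ?thesis .
  qed
  have e2: "emeasure M2 A = emeasure lborel (s -` A \<inter> {0..L})" if "A \<in> sets borel" for A
  proof -
    have pre: "s -` A \<in> sets borel" using that smeas by (auto intro: measurable_sets_borel)
    have "emeasure M2 A = emeasure (density lborel (indicator {0..L})) (s -` A)"
      unfolding M2_def using that smeas by (subst emeasure_distr) auto
    also have "\<dots> = (\<integral>\<^sup>+x. indicator {0..L} x * indicator (s -` A) x \<partial>lborel)"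
      using pre by (subst emeasure_density) auto
    also have "\<dots> = (\<integral>\<^sup>+x. indicator (s -` A \<inter> {0..L}) x \<partial>lborel)"
      by (intro nn_integral_cong) (simp split: split_indicator)
    also have "\<dots> = emeasure lborel (s -` A \<inter> {0..L})"
      using pre by simp
    finally show ?thesis .
  qed
  have le: "M1 \<le> M2"
    using sets1 sets2 key e1 e2 by (subst le_measure) auto
  have "integral\<^sup>N M1 f \<le> integral\<^sup>N M2 f"
    by (rule nn_integral_mono_measure[OF _ le]) (simp add: sets1 sets2)
  also have "integral\<^sup>N M1 f = (\<integral>\<^sup>+\<sigma>. indicator {0..S} \<sigma> * f \<sigma> \<partial>lborel)"
    unfolding M1_def using f by (subst nn_integral_density) auto
  also have "integral\<^sup>N M2 f = (\<integral>\<^sup>+t. f (s t) \<partial>density lborel (indicator {0..L}))"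
    unfolding M2_def using f smeas by (subst nn_integral_distr) auto
  also have "\<dots> = (\<integral>\<^sup>+t. indicator {0..L} t * f (s t) \<partial>lborel)"
    using f smeas by (subst nn_integral_density) auto
  finally show ?thesis by (simp add: mult.commute)
qed



lemma lip_cont_metric:
  fixes \<beta> :: "real \<Rightarrow> 'a::metric_space"
  assumes lip: "\<And>x y. dist (\<beta> x) (\<beta> y) \<le> \<bar>x - y\<bar>"
  shows "continuous_on A \<beta>"
  unfolding continuous_on_iff
proof (intro ballI allI impI)
  fix x e assume "(e::real) > 0"
  then show "\<exists>d>0. \<forall>x'\<in>A. dist x' x < d \<longrightarrow> dist (\<beta> x') (\<beta> x) < e"
    by (intro exI[of _ e]) (auto simp: dist_real_def intro: le_less_trans[OF lip])
qed

lemma reparam_curve: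
  fixes \<eta> :: "real \<Rightarrow> 'a::metric_space" and \<rho> :: "'a \<Rightarrow> ennreal"
  assumes lip: "\<And>s t. dist (\<eta> s) (\<eta> t) \<le> \<bar>s - t\<bar>" and L: "0 \<le> L"
    and rho: "\<rho> \<in> borel_measurable borel"
  obtains \<beta> S where "arclength_curve \<beta> S" "\<beta> 0 = \<eta> 0" "\<beta> S = \<eta> L"
     "line_integral \<rho> \<beta> S \<le> (\<integral>\<^sup>+t. \<rho> (\<eta> t) * indicator {0..L} t \<partial>lborel)"
proof -
  define D where "D a b = enn2real (curve_length \<eta> a b)" for a b
  have CLle: "curve_length \<eta> a b \<le> ennreal (b - a)" for a b
    by (rule CL_lip) (use lip in auto)
  have CLfin: "curve_length \<eta> a b \<noteq> \<infinity>" for a b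
    using le_less_trans[OF CLle[of a b] ennreal_less_top[of "b - a"]] by simp
  have CLD: "curve_length \<eta> a b = ennreal (D a b)" for a b
    using CLfin by (simp add: D_def ennreal_enn2real_if)
  have D0: "0 \<le> D a b" for a b by (simp add: D_def)
  have Dle: "D a b \<le> b - a" if "a \<le> b" for a b
    using CLle[of a b] that by (auto simp: CLD ennreal_le_iff2)
  have Dadd: "D a c = D a b + D b c" if "a \<le> b" "b \<le> c" for a b c
    using CL_add[OF that, of \<eta>] D0 by (simp add: CLD ennreal_plus[symmetric] del: ennreal_plus)
  define cl where "cl t = max 0 (min L t)" for t
  define s where "s t = D 0 (cl t)" for t
  have cl01: "0 \<le> cl t" "cl t \<le> L" for t using L by (auto simp: cl_def)
  have cl_id: "t \<in> {0..L} \<Longrightarrow> cl t = t" for t by (auto simp: cl_def)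
  have cl_mono: "a \<le> b \<Longrightarrow> cl a \<le> cl b" for a b by (auto simp: cl_def)
  have cl_lip: "a \<le> b \<Longrightarrow> cl b - cl a \<le> b - a" for a b by (auto simp: cl_def)
  have sdiff: "s b - s a = D (cl a) (cl b)" if "a \<le> b" for a b
    using Dadd[of 0 "cl a" "cl b"] cl01 cl_mono[OF that] by (simp add: s_def)
  have s_mono: "mono s"
    unfolding mono_def using sdiff D0 by (metis diff_ge_0_iff_ge)
  have s_lip: "\<bar>s x - s y\<bar> \<le> \<bar>x - y\<bar>" for x y
  proof (cases "x \<le> y")
    case True
    then show ?thesis using sdiff[OF True] D0[of "cl x" "cl y"] Dle[OF cl_mono[OF True]] cl_lip[OF True] by auto
  next
    case False
    then have "y \<le> x" by simp
    then show ?thesis using sdiff[OF \<open>y \<le> x\<close>] D0[of "cl y" "cl x"] Dle[OF cl_mono[OF \<open>y \<le> x\<close>]] cl_lip[OF \<open>y \<le> x\<close>] by auto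
  qed
  have s0: "s 0 = 0"
    using Dle[of 0 0] D0[of 0 0] by (simp add: s_def cl_def)
  define S where "S = s L"
  have S0: "0 \<le> S" using s_mono L s0 by (simp add: S_def mono_def) (metis s0)
  have s_range: "t \<in> {0..L} \<Longrightarrow> s t \<in> {0..S}" for t
    using s_mono s0 by (auto simp: S_def mono_def) (metis s0)
  have eta_s: "dist (\<eta> a) (\<eta> b) \<le> \<bar>s a - s b\<bar>" if "a \<in> {0..L}" "b \<in> {0..L}" for a b
  proof -
    have *: "dist (\<eta> a) (\<eta> b) \<le> s b - s a" if "a \<in> {0..L}" "b \<in> {0..L}" "a \<le> b" for a b
    proof -
      have "ennreal (dist (\<eta> a) (\<eta> b)) \<le> ennreal (D a b)"
        using CL_dist[OF that(3), of \<eta>] by (simp add: CLD)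
      then have "dist (\<eta> a) (\<eta> b) \<le> D a b" using D0 by (auto simp: ennreal_le_iff2)
      then show ?thesis using sdiff[OF that(3)] cl_id that by simp
    qed
    show ?thesis
      using *[of a b] *[of b a] that by (cases "a \<le> b") (auto simp: dist_commute)
  qed
  have scont: "continuous_on A s" for A by (rule lip_cont[OF s_lip])
  define pick where "pick \<sigma> = (SOME t. t \<in> {0..L} \<and> s t = \<sigma>)" for \<sigma>
  have pick: "pick \<sigma> \<in> {0..L} \<and> s (pick \<sigma>) = \<sigma>" if sig: "\<sigma> \<in> {0..S}" for \<sigma>
  proof -
    obtain t where "0 \<le> t" "t \<le> L" "s t = \<sigma>"
      using IVT'[of s 0 \<sigma> L, OF _ _ L scont] s0 sig by (auto simp: S_def)
    then have "\<exists>t. t \<in> {0..L} \<and> s t = \<sigma>" by auto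
    then show ?thesis unfolding pick_def by (rule someI_ex)
  qed
  define cS where "cS \<sigma> = max 0 (min S \<sigma>)" for \<sigma>
  have cS: "cS \<sigma> \<in> {0..S}" for \<sigma> using S0 by (auto simp: cS_def)
  have cS_id: "\<sigma> \<in> {0..S} \<Longrightarrow> cS \<sigma> = \<sigma>" for \<sigma> by (auto simp: cS_def)
  have cS_lip: "\<bar>cS x - cS y\<bar> \<le> \<bar>x - y\<bar>" for x y by (auto simp: cS_def)
  define \<beta> where "\<beta> \<sigma> = \<eta> (pick (cS \<sigma>))" for \<sigma>
  have b1: "\<beta> (s t) = \<eta> t" if "t \<in> {0..L}" for t
  proof -
    have st: "s t \<in> {0..S}" using s_range[OF that] .
    have p: "pick (s t) \<in> {0..L}" "s (pick (s t)) = s t" using pick[OF st] by auto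
    have "dist (\<eta> (pick (s t))) (\<eta> t) \<le> 0" using eta_s[OF p(1) that] p(2) by simp
    then show ?thesis by (simp add: \<beta>_def cS_id[OF st])
  qed
  have b2: "dist (\<beta> x) (\<beta> y) \<le> \<bar>x - y\<bar>" for x y
  proof -
    have px: "pick (cS x) \<in> {0..L}" "s (pick (cS x)) = cS x" using pick[OF cS] by auto
    have py: "pick (cS y) \<in> {0..L}" "s (pick (cS y)) = cS y" using pick[OF cS] by auto
    have "dist (\<beta> x) (\<beta> y) \<le> \<bar>cS x - cS y\<bar>"
      using eta_s[OF px(1) py(1)] px(2) py(2) by (simp add: \<beta>_def)
    then show ?thesis using cS_lip[of x y] by linarith
  qed
  have arc: "arclength_curve \<beta> S"
    unfolding arclength_curve_def
  proof (intro conjI allI impI)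
    show "0 \<le> S" by (rule S0)
    show "continuous_on {0..S} \<beta>" by (rule lip_cont_metric[OF b2])
    fix \<sigma>1 \<sigma>2 assume h: "0 \<le> \<sigma>1" "\<sigma>1 \<le> \<sigma>2" "\<sigma>2 \<le> S"
    show "curve_length \<beta> \<sigma>1 \<sigma>2 = ennreal (\<sigma>2 - \<sigma>1)"
    proof (rule antisym)
      show "curve_length \<beta> \<sigma>1 \<sigma>2 \<le> ennreal (\<sigma>2 - \<sigma>1)"
        by (rule CL_lip) (use b2 in auto)
      have p1: "pick \<sigma>1 \<in> {0..L}" "s (pick \<sigma>1) = \<sigma>1" using pick[of \<sigma>1] h by auto
      have p2: "pick \<sigma>2 \<in> {0..L}" "s (pick \<sigma>2) = \<sigma>2" using pick[of \<sigma>2] h by auto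
      define t1 where "t1 = pick \<sigma>1"
      define t2 where "t2 = max (pick \<sigma>1) (pick \<sigma>2)"
      have t12: "t1 \<le> t2" "t1 \<in> {0..L}" "t2 \<in> {0..L}" using p1 p2 by (auto simp: t1_def t2_def)
      have st1: "s t1 = \<sigma>1" using p1 by (simp add: t1_def)
      have st2: "s t2 = \<sigma>2"
      proof (cases "pick \<sigma>2 < pick \<sigma>1")
        case True
        then have "s (pick \<sigma>2) \<le> s (pick \<sigma>1)" using s_mono by (simp add: mono_def)
        then show ?thesis using True p1 p2 h by (simp add: t2_def)
      next
        case False then show ?thesis using p2 by (simp add: t2_def)
      qed
      have "curve_length \<eta> t1 t2 \<le> curve_length \<beta> \<sigma>1 \<sigma>2"
      proof (rule CL_reparam[where \<phi> = s])
        show "\<And>x y. t1 \<le> x \<Longrightarrow> x \<le> y \<Longrightarrow> y \<le> t2 \<Longrightarrow> s x \<le> s y" using s_mono by (simp add: mono_def)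
        show "s t1 = \<sigma>1" "s t2 = \<sigma>2" by (rule st1, rule st2)
        show "\<And>t. t \<in> {t1..t2} \<Longrightarrow> \<beta> (s t) = \<eta> t" using b1 t12 by auto
      qed
      moreover have "curve_length \<eta> t1 t2 = ennreal (\<sigma>2 - \<sigma>1)"
        using sdiff[OF t12(1)] cl_id t12 st1 st2 by (simp add: CLD)
      ultimately show "ennreal (\<sigma>2 - \<sigma>1) \<le> curve_length \<beta> \<sigma>1 \<sigma>2" by simp
    qed
  qed
  have beta0: "\<beta> 0 = \<eta> 0" using b1[of 0] s0 L by simp
  have betaS: "\<beta> S = \<eta> L" using b1[of L] L by (simp add: S_def)
  have bmeas: "(\<lambda>\<sigma>. \<rho> (\<beta> \<sigma>)) \<in> borel_measurable borel"
    using lip_cont_metric[OF b2, of UNIV] rho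
    by (intro measurable_compose[OF borel_measurable_continuous_onI[of \<beta>]]) auto
  have "line_integral \<rho> \<beta> S = (\<integral>\<^sup>+\<sigma>. \<rho> (\<beta> \<sigma>) * indicator {0..S} \<sigma> \<partial>lborel)"
    by (simp add: line_integral_def)
  also have "\<dots> \<le> (\<integral>\<^sup>+t. \<rho> (\<beta> (s t)) * indicator {0..L} t \<partial>lborel)"
    by (rule integral_reparam_le[OF s_lip s_mono s0 S_def[symmetric] L bmeas])
  also have "\<dots> = (\<integral>\<^sup>+t. \<rho> (\<eta> t) * indicator {0..L} t \<partial>lborel)"
    by (intro nn_integral_cong) (simp add: b1 split: split_indicator)
  finally show ?thesis using that arc beta0 betaS by blast
qed



definition Vf :: "'a::metric_space set \<Rightarrow> ('a \<Rightarrow> ennreal) \<Rightarrow> 'a \<Rightarrow> ennreal" where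
  "Vf F \<rho> x = (INF (\<gamma>, l) \<in> {(\<gamma>, l). arclength_curve \<gamma> l \<and> \<gamma> 0 = x \<and> \<gamma> l \<in> F}. line_integral \<rho> \<gamma> l)"

lemma arclength_lip:
  assumes "arclength_curve \<gamma> l" "s \<in> {0..l}" "t \<in> {0..l}"
  shows "dist (\<gamma> s) (\<gamma> t) \<le> \<bar>s - t\<bar>"
proof -
  have *: "dist (\<gamma> s) (\<gamma> t) \<le> t - s" if "s \<in> {0..l}" "t \<in> {0..l}" "s \<le> t" for s t
  proof -
    have "ennreal (dist (\<gamma> s) (\<gamma> t)) \<le> ennreal (t - s)"
      using CL_dist[OF that(3), of \<gamma>] assms(1) that by (simp add: arclength_curve_def)
    then show ?thesis using that by (simp add: ennreal_le_iff2) (use that in auto)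
  qed
  show ?thesis using *[of s t] *[of t s] assms by (cases "s \<le> t") (auto simp: dist_commute)
qed

lemma lsc_borel:
  fixes \<rho> :: "'a::metric_space \<Rightarrow> ennreal"
  assumes "lower_semicont \<rho>"
  shows "\<rho> \<in> borel_measurable borel"
  by (rule borel_measurableI_greater) (use assms in \<open>auto simp: lower_semicont_def\<close>)

lemma first_hit:
  fixes \<gamma> :: "real \<Rightarrow> 'a::metric_space"
  assumes cont: "continuous_on {0..l} \<gamma>" and F: "closed F" and ex: "\<exists>t\<in>{0..l}. \<gamma> t \<in> F"
  obtains a where "a \<in> {0..l}" "\<gamma> a \<in> F" "\<And>t. 0 \<le> t \<Longrightarrow> t < a \<Longrightarrow> \<gamma> t \<notin> F"
proof -
  define H where "H = {t \<in> {0..l}. \<gamma> t \<in> F}"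
  have Hne: "H \<noteq> {}" using ex by (auto simp: H_def)
  have Hcl: "closed H" unfolding H_def
    using continuous_closed_preimage[OF cont closed_atLeastAtMost F] by (simp add: vimage_def Int_def conj_commute)
  have Hbdd: "bdd_below H" by (auto simp: H_def bdd_below_def)
  have "Inf H \<in> H" by (rule closed_contains_Inf[OF Hne Hbdd Hcl])
  moreover have "\<gamma> t \<notin> F" if "0 \<le> t" "t < Inf H" for t
  proof
    assume "\<gamma> t \<in> F"
    moreover have "t \<le> l" using \<open>Inf H \<in> H\<close> that by (auto simp: H_def)
    ultimately have "t \<in> H" using that by (auto simp: H_def)
    then have "Inf H \<le> t" by (rule cInf_lower[OF _ Hbdd])
    then show False using that by simp
  qed
  ultimately show ?thesis using that by (auto simp: H_def)
qed

lemma V_le_lip: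
  fixes \<eta> :: "real \<Rightarrow> 'a::metric_space"
  assumes lip: "\<And>s t. dist (\<eta> s) (\<eta> t) \<le> \<bar>s - t\<bar>" and L: "0 \<le> L" and "\<eta> L \<in> F"
    and rho: "\<rho> \<in> borel_measurable borel"
  shows "Vf F \<rho> (\<eta> 0) \<le> (\<integral>\<^sup>+t. \<rho> (\<eta> t) * indicator {0..L} t \<partial>lborel)"
proof -
  obtain \<beta> S where b: "arclength_curve \<beta> S" "\<beta> 0 = \<eta> 0" "\<beta> S = \<eta> L"
     "line_integral \<rho> \<beta> S \<le> (\<integral>\<^sup>+t. \<rho> (\<eta> t) * indicator {0..L} t \<partial>lborel)"
    using reparam_curve[OF lip L rho] by blast
  have "Vf F \<rho> (\<eta> 0) \<le> line_integral \<rho> \<beta> S"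
    unfolding Vf_def by (rule INF_lower2[of "(\<beta>, S)"]) (use b assms in auto)
  then show ?thesis using b(4) by simp
qed

lemma clamp_curve:
  assumes arc: "arclength_curve \<gamma> l" and a: "a \<in> {0..l}"
  defines "\<eta> \<equiv> \<lambda>t. \<gamma> (max 0 (min a t))"
  shows "\<And>s t. dist (\<eta> s) (\<eta> t) \<le> \<bar>s - t\<bar>" "\<eta> 0 = \<gamma> 0" "\<And>t. t \<in> {0..a} \<Longrightarrow> \<eta> t = \<gamma> t"
    "\<And>t. dist (\<eta> t) (\<eta> 0) \<le> a"
proof -
  fix s t
  have "dist (\<eta> s) (\<eta> t) \<le> \<bar>max 0 (min a s) - max 0 (min a t)\<bar>"
    unfolding \<eta>_def by (rule arclength_lip[OF arc]) (use a in auto)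
  also have "\<dots> \<le> \<bar>s - t\<bar>" by auto
  finally show "dist (\<eta> s) (\<eta> t) \<le> \<bar>s - t\<bar>" .
next
  show "\<eta> 0 = \<gamma> 0" using a by (simp add: \<eta>_def)
next
  fix t assume "t \<in> {0..a}" then show "\<eta> t = \<gamma> t" by (simp add: \<eta>_def)
next
  fix t
  have "dist (\<eta> t) (\<eta> 0) \<le> \<bar>max 0 (min a t) - max 0 (min a 0)\<bar>"
    unfolding \<eta>_def by (rule arclength_lip[OF arc]) (use a in auto)
  also have "\<dots> \<le> a" using a by auto
  finally show "dist (\<eta> t) (\<eta> 0) \<le> a" .
qed

lemma lip_borel:
  fixes \<eta> :: "real \<Rightarrow> 'a::metric_space"
  assumes lip: "\<And>s t. dist (\<eta> s) (\<eta> t) \<le> \<bar>s - t\<bar>" and rho: "\<rho> \<in> borel_measurable borel"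
  shows "(\<lambda>t. \<rho> (\<eta> t)) \<in> borel_measurable borel"
  using lip_cont_metric[OF lip, of UNIV] rho
  by (intro measurable_compose[OF borel_measurable_continuous_onI[of \<eta>]]) auto



lemma concat_bound:
  fixes \<gamma> :: "real \<Rightarrow> 'a::metric_space"
  assumes lip: "\<And>s t. dist (\<gamma> s) (\<gamma> t) \<le> \<bar>s - t\<bar>" and l: "0 \<le> l"
    and F: "closed F" and rho: "\<rho> \<in> borel_measurable borel"
    and arc: "arclength_curve \<beta> m" "\<beta> 0 = \<gamma> l" "\<beta> m \<in> F"
  shows "Vf F \<rho> (\<gamma> 0) \<le> (\<integral>\<^sup>+t. \<rho> (\<gamma> t) * indicator {0..l} t \<partial>lborel) + line_integral \<rho> \<beta> m"
proof -
  have m: "0 \<le> m" using arc by (simp add: arclength_curve_def)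
  define \<beta>c where "\<beta>c = (\<lambda>t. \<beta> (max 0 (min m t)))"
  have am: "m \<in> {0..m}" using m by simp
  have bc1: "dist (\<beta>c s) (\<beta>c t) \<le> \<bar>s - t\<bar>" for s t
    using clamp_curve(1)[OF arc(1) am] unfolding \<beta>c_def by simp
  have bc2: "\<beta>c 0 = \<beta> 0" using clamp_curve(2)[OF arc(1) am] unfolding \<beta>c_def by simp
  have bc_id: "\<beta>c t = \<beta> t" if "t \<in> {0..m}" for t
    using clamp_curve(3)[OF arc(1) am that] unfolding \<beta>c_def by simp
  define \<delta> where "\<delta> = (\<lambda>t. if t \<le> l then \<gamma> t else \<beta>c (t - l))"
  have bc0: "\<beta>c 0 = \<gamma> l" using bc2 arc(2) by simp
  have dlip: "dist (\<delta> s) (\<delta> t) \<le> \<bar>s - t\<bar>" for s t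
  proof -
    have mixed: "dist (\<gamma> s) (\<beta>c (t - l)) \<le> \<bar>s - t\<bar>" if "s \<le> l" "\<not> t \<le> l" for s t
    proof -
      have "dist (\<gamma> s) (\<beta>c (t - l)) \<le> dist (\<gamma> s) (\<gamma> l) + dist (\<beta>c 0) (\<beta>c (t - l))"
        using dist_triangle[of "\<gamma> s" "\<beta>c (t - l)" "\<gamma> l"] bc0 by simp
      also have "\<dots> \<le> \<bar>s - l\<bar> + \<bar>0 - (t - l)\<bar>" by (intro add_mono lip bc1)
      also have "\<dots> = \<bar>s - t\<bar>" using that by auto
      finally show ?thesis .
    qed
    show ?thesis
      using lip[of s t] bc1[of "s - l" "t - l"] mixed[of s t] mixed[of t s]
      by (auto simp: \<delta>_def dist_commute abs_minus_commute)
  qed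
  have d0: "\<delta> 0 = \<gamma> 0" using l by (simp add: \<delta>_def)
  have dend: "\<delta> (l + m) \<in> F"
  proof (cases "m = 0")
    case True then show ?thesis using arc by (simp add: \<delta>_def)
  next
    case False then show ?thesis using m arc bc_id[of m] by (simp add: \<delta>_def)
  qed
  have "Vf F \<rho> (\<gamma> 0) \<le> (\<integral>\<^sup>+t. \<rho> (\<delta> t) * indicator {0..l+m} t \<partial>lborel)"
    using V_le_lip[OF dlip _ dend rho] l m d0 by simp
  also have "\<dots> \<le> (\<integral>\<^sup>+t. \<rho> (\<gamma> t) * indicator {0..l} t + \<rho> (\<beta>c (t - l)) * indicator {l..l+m} t \<partial>lborel)"
    by (intro nn_integral_mono) (auto simp: \<delta>_def split: split_indicator)
  also have "\<dots> = (\<integral>\<^sup>+t. \<rho> (\<gamma> t) * indicator {0..l} t \<partial>lborel) + (\<integral>\<^sup>+t. \<rho> (\<beta>c (t - l)) * indicator {l..l+m} t \<partial>lborel)"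
  proof (rule nn_integral_add)
    show "(\<lambda>t. \<rho> (\<gamma> t) * indicator {0..l} t) \<in> borel_measurable lborel"
      using lip_borel[OF lip rho] by simp
    have "(\<lambda>t. \<rho> (\<beta>c (t - l))) \<in> borel_measurable borel"
    proof (rule lip_borel[OF _ rho])
      fix s t show "dist (\<beta>c (s - l)) (\<beta>c (t - l)) \<le> \<bar>s - t\<bar>" using bc1[of "s - l" "t - l"] by simp
    qed
    then show "(\<lambda>t. \<rho> (\<beta>c (t - l)) * indicator {l..l+m} t) \<in> borel_measurable lborel"
      by simp
  qed
  also have "(\<integral>\<^sup>+t. \<rho> (\<beta>c (t - l)) * indicator {l..l+m} t \<partial>lborel) = line_integral \<rho> \<beta> m"
  proof -
    have meas: "(\<lambda>t. \<rho> (\<beta>c (t - l)) * indicator {l..l+m} t) \<in> borel_measurable borel"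
    proof -
      have "(\<lambda>t. \<rho> (\<beta>c (t - l))) \<in> borel_measurable borel"
      proof (rule lip_borel[OF _ rho])
        fix s t show "dist (\<beta>c (s - l)) (\<beta>c (t - l)) \<le> \<bar>s - t\<bar>" using bc1[of "s - l" "t - l"] by simp
      qed
      then show ?thesis by simp
    qed
    have "(\<integral>\<^sup>+t. \<rho> (\<beta>c (t - l)) * indicator {l..l+m} t \<partial>lborel)
        = ennreal \<bar>1\<bar> * (\<integral>\<^sup>+x. \<rho> (\<beta>c (l + 1 * x - l)) * indicator {l..l+m} (l + 1 * x) \<partial>lborel)"
      by (rule nn_integral_real_affine[OF meas]) simp
    also have "\<dots> = (\<integral>\<^sup>+x. \<rho> (\<beta>c x) * indicator {l..l+m} (l + x) \<partial>lborel)" by simp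
    also have "\<dots> = (\<integral>\<^sup>+x. \<rho> (\<beta> x) * indicator {0..m} x \<partial>lborel)"
      by (intro nn_integral_cong) (simp add: bc_id split: split_indicator)
    finally show ?thesis by (simp add: line_integral_def)
  qed
  finally show ?thesis .
qed

lemma UG1:
  fixes \<gamma> :: "real \<Rightarrow> 'a::metric_space"
  assumes lip: "\<And>s t. dist (\<gamma> s) (\<gamma> t) \<le> \<bar>s - t\<bar>" and l: "0 \<le> l"
    and F: "closed F" and rho: "\<rho> \<in> borel_measurable borel"
  shows "min 1 (Vf F \<rho> (\<gamma> 0)) \<le> min 1 (Vf F \<rho> (\<gamma> l)) +
           (\<integral>\<^sup>+t. (if \<gamma> t \<in> F then 0 else \<rho> (\<gamma> t)) * indicator {0..l} t \<partial>lborel)"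
    (is "?ux \<le> ?uy + ?I")
proof (cases "\<exists>t\<in>{0..l}. \<gamma> t \<in> F")
  case True
  obtain a where a: "a \<in> {0..l}" "\<gamma> a \<in> F" "\<And>t. 0 \<le> t \<Longrightarrow> t < a \<Longrightarrow> \<gamma> t \<notin> F"
    using first_hit[OF lip_cont_metric[OF lip] F True] by blast
  have "Vf F \<rho> (\<gamma> 0) \<le> (\<integral>\<^sup>+t. \<rho> (\<gamma> t) * indicator {0..a} t \<partial>lborel)"
    using V_le_lip[OF lip _ a(2) rho] a(1) by simp
  also have "\<dots> = (\<integral>\<^sup>+t. \<rho> (\<gamma> t) * indicator {0..<a} t \<partial>lborel)"
    by (intro nn_integral_cong_AE) (use AE_lborel_singleton[of a] in \<open>eventually_elim, simp split: split_indicator\<close>)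
  also have "\<dots> \<le> ?I"
    by (intro nn_integral_mono) (use a in \<open>auto split: split_indicator\<close>)
  finally have "Vf F \<rho> (\<gamma> 0) \<le> ?I" .
  then have "?ux \<le> ?I" by (simp add: min.coboundedI2)
  also have "\<dots> \<le> ?uy + ?I" by simp
  finally show ?thesis .
next
  case False
  define J where "J = (\<integral>\<^sup>+t. \<rho> (\<gamma> t) * indicator {0..l} t \<partial>lborel)"
  have IJ: "?I = J" unfolding J_def
    by (intro nn_integral_cong) (use False in \<open>auto split: split_indicator\<close>)
  have key: "Vf F \<rho> (\<gamma> 0) \<le> J + Vf F \<rho> (\<gamma> l)"
  proof (rule ennreal_le_epsilon)
    fix e :: real assume lt: "J + Vf F \<rho> (\<gamma> l) < top" and e: "0 < e"
    have "Vf F \<rho> (\<gamma> l) < top" using le_less_trans[OF add_increasing[OF zero_le order_refl] lt] .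
    then obtain r where r: "Vf F \<rho> (\<gamma> l) = ennreal r" "0 \<le> r" by (cases "Vf F \<rho> (\<gamma> l)") auto
    have Vy: "Vf F \<rho> (\<gamma> l) < Vf F \<rho> (\<gamma> l) + ennreal e"
      using r e by (simp add: ennreal_plus[symmetric] ennreal_less_iff del: ennreal_plus)
    then obtain \<beta> m where bm: "arclength_curve \<beta> m" "\<beta> 0 = \<gamma> l" "\<beta> m \<in> F"
        "line_integral \<rho> \<beta> m < Vf F \<rho> (\<gamma> l) + ennreal e"
      unfolding Vf_def[of F \<rho> "\<gamma> l"] by (subst (asm) INF_less_iff) auto
    have "Vf F \<rho> (\<gamma> 0) \<le> J + line_integral \<rho> \<beta> m"
      unfolding J_def by (rule concat_bound[OF lip l F rho bm(1-3)])
    also have "\<dots> \<le> J + (Vf F \<rho> (\<gamma> l) + ennreal e)"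
      using bm(4) by (intro add_left_mono) simp
    finally show "Vf F \<rho> (\<gamma> 0) \<le> J + Vf F \<rho> (\<gamma> l) + ennreal e" by (simp add: add.assoc)
  qed
  have "?ux \<le> min 1 (J + Vf F \<rho> (\<gamma> l))" using key by (rule min.mono[OF order_refl])
  also have "\<dots> \<le> ?uy + J"
  proof (cases "Vf F \<rho> (\<gamma> l) \<le> 1")
    case True
    have "min 1 (J + Vf F \<rho> (\<gamma> l)) \<le> J + Vf F \<rho> (\<gamma> l)" by (rule min.cobounded2[of 1])
    then show ?thesis using True by (simp add: add.commute)
  next
    case False
    then have "?uy = 1" by simp
    then show ?thesis by (simp add: min.coboundedI1)
  qed
  finally show ?thesis using IJ by simp
qed



lemma good_curve:
  fixes x :: "'a::metric_space"
  assumes V: "Vf F \<rho> x < ennreal b" and F: "closed F" and rho: "\<rho> \<in> borel_measurable borel"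
    and c: "c > 0" and cF: "\<forall>x. x \<notin> F \<longrightarrow> ennreal c \<le> \<rho> x"
  shows "\<exists>\<eta> a. (\<forall>s t. dist (\<eta> s) (\<eta> t) \<le> \<bar>s - t\<bar>) \<and> \<eta> 0 = x \<and> \<eta> a \<in> F \<and> 0 \<le> a \<and> a \<le> b / c \<and>
    (\<integral>\<^sup>+t. \<rho> (\<eta> t) * indicator {0..a} t \<partial>lborel) \<le> ennreal b \<and> (\<forall>t. dist (\<eta> t) (\<eta> 0) \<le> a)"
proof -
  obtain \<gamma> l where g: "arclength_curve \<gamma> l" "\<gamma> 0 = x" "\<gamma> l \<in> F" "line_integral \<rho> \<gamma> l < ennreal b"
    using V unfolding Vf_def by (subst (asm) INF_less_iff) auto
  have l: "0 \<le> l" and gc: "continuous_on {0..l} \<gamma>" using g(1) by (auto simp: arclength_curve_def)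
  have ex: "\<exists>t\<in>{0..l}. \<gamma> t \<in> F" using g(3) l by auto
  obtain a where a: "a \<in> {0..l}" "\<gamma> a \<in> F" "\<And>t. 0 \<le> t \<Longrightarrow> t < a \<Longrightarrow> \<gamma> t \<notin> F"
    using first_hit[OF gc F ex] by blast
  define \<eta> where "\<eta> = (\<lambda>t. \<gamma> (max 0 (min a t)))"
  have e1: "dist (\<eta> s) (\<eta> t) \<le> \<bar>s - t\<bar>" for s t using clamp_curve(1)[OF g(1) a(1)] unfolding \<eta>_def by simp
  have e2: "\<eta> 0 = x" using clamp_curve(2)[OF g(1) a(1)] g(2) unfolding \<eta>_def by simp
  have e3: "\<eta> t = \<gamma> t" if "t \<in> {0..a}" for t using clamp_curve(3)[OF g(1) a(1) that] unfolding \<eta>_def by simp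
  have e4: "dist (\<eta> t) (\<eta> 0) \<le> a" for t using clamp_curve(4)[OF g(1) a(1)] unfolding \<eta>_def by simp
  have a0: "0 \<le> a" using a by simp
  have int: "(\<integral>\<^sup>+t. \<rho> (\<eta> t) * indicator {0..a} t \<partial>lborel) \<le> ennreal b"
  proof -
    have "(\<integral>\<^sup>+t. \<rho> (\<eta> t) * indicator {0..a} t \<partial>lborel) \<le> (\<integral>\<^sup>+t. \<rho> (\<gamma> t) * indicator {0..l} t \<partial>lborel)"
      by (intro nn_integral_mono) (use a e3 in \<open>auto split: split_indicator\<close>)
    also have "\<dots> = line_integral \<rho> \<gamma> l" by (simp add: line_integral_def)
    finally show ?thesis using g(4) by simp
  qed
  have "(\<integral>\<^sup>+t. ennreal c * indicator {0..<a} t \<partial>lborel) = ennreal c * emeasure lborel {0..<a}"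
    by (rule nn_integral_cmult_indicator) simp
  then have "ennreal (c * a) = (\<integral>\<^sup>+t. ennreal c * indicator {0..<a} t \<partial>lborel)"
    using a0 c by (simp add: ennreal_mult)
  also have "\<dots> \<le> (\<integral>\<^sup>+t. \<rho> (\<eta> t) * indicator {0..a} t \<partial>lborel)"
  proof (intro nn_integral_mono)
    fix t
    show "ennreal c * indicator {0..<a} t \<le> \<rho> (\<eta> t) * indicator {0..a} t"
    proof (cases "t \<in> {0..<a}")
      case True
      then have "\<eta> t = \<gamma> t" "\<gamma> t \<notin> F" using e3 a(3) by auto
      then show ?thesis using cF True by (simp split: split_indicator)
    qed simp
  qed
  also have "\<dots> \<le> ennreal b" by (rule int)
  finally have cab: "ennreal (c * a) \<le> ennreal b" .
  have bpos: "0 < b" using le_less_trans[OF zero_le V] by simp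
  have "c * a \<le> b" using cab bpos by (simp add: ennreal_le_iff)
  then have "a \<le> b / c" using c by (simp add: field_simps)
  then show ?thesis using e1 e2 e3 e4 a a0 int by (intro exI[of _ \<eta>] exI[of _ a]) auto
qed

lemma lsc_limit:
  fixes \<rho> :: "'a::topological_space \<Rightarrow> ennreal"
  assumes lsc: "lower_semicont \<rho>" and y: "Y \<longlonglongrightarrow> y"
  shows "\<rho> y \<le> liminf (\<lambda>n. \<rho> (Y n))"
  unfolding le_Liminf_iff
proof (intro allI impI)
  fix z assume "z < \<rho> y"
  then have "y \<in> {x. z < \<rho> x}" by simp
  moreover have "open {x. z < \<rho> x}" using lsc by (simp add: lower_semicont_def)
  ultimately show "\<forall>\<^sub>F n in sequentially. z < \<rho> (Y n)"
    using topological_tendstoD[OF y] by fastforce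
qed



lemma limit_step:
  fixes xs :: "nat \<Rightarrow> 'a::metric_space" and \<rho> :: "'a \<Rightarrow> ennreal"
  assumes proper: "proper_space TYPE('a)" and F: "closed F" and lsc: "lower_semicont \<rho>"
    and c: "c > 0" and cF: "\<forall>x. x \<notin> F \<longrightarrow> ennreal c \<le> \<rho> x"
    and xs: "xs \<longlonglongrightarrow> x0" and V: "\<And>n. Vf F \<rho> (xs n) < ennreal b"
  shows "Vf F \<rho> x0 \<le> ennreal b"
proof -
  have rho: "\<rho> \<in> borel_measurable borel" by (rule lsc_borel[OF lsc])
  define P where "P n \<eta> a \<longleftrightarrow> (\<forall>s t. dist (\<eta> s) (\<eta> t) \<le> \<bar>s - t\<bar>) \<and> \<eta> 0 = xs n \<and> \<eta> a \<in> F \<and> 0 \<le> a \<and> a \<le> b / c \<and>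
    (\<integral>\<^sup>+t. \<rho> (\<eta> t) * indicator {0..a} t \<partial>lborel) \<le> ennreal b \<and> (\<forall>t. dist (\<eta> t) (\<eta> 0) \<le> a)" for n \<eta> a
  have "\<forall>n. \<exists>\<eta> a. P n \<eta> a"
    unfolding P_def using good_curve[OF V F rho c cF] by blast
  then obtain \<eta> a where Pn: "\<And>n. P n (\<eta> n) (a n)"
    by metis
  have lip: "\<And>n s t. dist (\<eta> n s) (\<eta> n t) \<le> \<bar>s - t\<bar>" and
    st: "\<And>n. \<eta> n 0 = xs n" and en: "\<And>n. \<eta> n (a n) \<in> F" and
    a0: "\<And>n. 0 \<le> a n" and aM: "\<And>n. a n \<le> b / c" and
    int: "\<And>n. (\<integral>\<^sup>+t. \<rho> (\<eta> n t) * indicator {0..a n} t \<partial>lborel) \<le> ennreal b" and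
    rad: "\<And>n t. dist (\<eta> n t) (\<eta> n 0) \<le> a n"
    using Pn unfolding P_def by blast+
  define M where "M = b / c"
  obtain R where R: "\<And>n. dist x0 (xs n) \<le> R"
    using bounded_any_center[of "range xs" x0] convergent_imp_bounded[OF xs] by auto
  define K where "K = cball x0 (R + M)"
  have Kc: "compact K" using proper by (simp add: K_def proper_space_def)
  have inK: "\<eta> n t \<in> K" for n t
  proof -
    have "dist x0 (\<eta> n t) \<le> dist x0 (\<eta> n 0) + dist (\<eta> n 0) (\<eta> n t)" by (rule dist_triangle)
    also have "\<dots> \<le> R + M" using R[of n] rad[of n t] aM[of n] st[of n] by (simp add: M_def dist_commute)
    finally show ?thesis by (simp add: K_def)
  qed
  have aI: "\<forall>n. a n \<in> {0..M}" using a0 aM by (simp add: M_def)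
  obtain A0 r0 where A0: "A0 \<in> {0..M}" "strict_mono r0" "(a \<circ> r0) \<longlonglongrightarrow> A0"
    using compact_Icc[of 0 M] aI unfolding compact_def by blast
  define Q where "Q = from_nat_into (\<rat>::real set)"
  have Q: "range Q = \<rat>" unfolding Q_def
    by (rule range_from_nat_into) (auto simp: countable_rat)
  define Pd where "Pd i h \<longleftrightarrow> (\<exists>l. (\<lambda>n. \<eta> (r0 (h n)) (Q i)) \<longlonglongrightarrow> l)" for i and h :: "nat \<Rightarrow> nat"
  obtain k where k: "strict_mono (k :: nat \<Rightarrow> nat)" and kP: "\<And>i. Pd i (id \<circ> k)"
  proof (rule subsequence_diagonalization_lemma[of Pd id])
    fix i and r :: "nat \<Rightarrow> nat"
    have "\<forall>n. (\<lambda>n. \<eta> (r0 (r n)) (Q i)) n \<in> K" using inK by simp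
    with compact_def[THEN iffD1, OF Kc, rule_format, of "\<lambda>n. \<eta> (r0 (r n)) (Q i)"]
    obtain l kk where "strict_mono kk" "((\<lambda>n. \<eta> (r0 (r n)) (Q i)) \<circ> kk) \<longlonglongrightarrow> l"
      by blast
    then show "\<exists>k. strict_mono k \<and> Pd i (r \<circ> k)"
      unfolding Pd_def by (intro exI[of _ kk] conjI exI[of _ l]) (simp_all add: o_def)
  next
    fix i and r k1 k2 :: "nat \<Rightarrow> nat" and N
    assume h1: "Pd i (r \<circ> k1)"
      and h2: "\<And>j. N \<le> j \<Longrightarrow> \<exists>j'\<ge>j. k2 j = k1 j'"
    from h1 obtain l where l: "(\<lambda>n. \<eta> (r0 (r (k1 n))) (Q i)) \<longlonglongrightarrow> l" unfolding Pd_def by auto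
    have "(\<lambda>n. \<eta> (r0 (r (k2 n))) (Q i)) \<longlonglongrightarrow> l"
      unfolding lim_sequentially
    proof (intro allI impI)
      fix e :: real assume "e > 0"
      then obtain N0 where N0: "\<And>n. n \<ge> N0 \<Longrightarrow> dist (\<eta> (r0 (r (k1 n))) (Q i)) l < e"
        using l unfolding lim_sequentially by blast
      show "\<exists>N'. \<forall>n\<ge>N'. dist (\<eta> (r0 (r (k2 n))) (Q i)) l < e"
      proof (intro exI allI impI)
        fix n assume "max N N0 \<le> n"
        then obtain j' where "j' \<ge> n" "k2 n = k1 j'" using h2[of n] by auto
        then show "dist (\<eta> (r0 (r (k2 n))) (Q i)) l < e" using N0[of j'] \<open>max N N0 \<le> n\<close> by simp
      qed
    qed
    then show "Pd i (r \<circ> k2)" unfolding Pd_def by (auto simp: o_def)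
  next
    fix k :: "nat \<Rightarrow> nat" assume "strict_mono k" "\<And>i. Pd i (id \<circ> k)"
    then show thesis by (rule that)
  qed
  define \<sigma> where "\<sigma> = r0 \<circ> k"
  have \<sigma>: "strict_mono \<sigma>" unfolding \<sigma>_def using A0(2) k by (rule strict_mono_o)
  define es where "es n = \<eta> (\<sigma> n)" for n
  define as where "as n = a (\<sigma> n)" for n
  have as_eq: "as = (a \<circ> r0) \<circ> k" by (simp add: fun_eq_iff as_def \<sigma>_def)
  have as_lim: "as \<longlonglongrightarrow> A0"
    unfolding as_eq by (rule LIMSEQ_subseq_LIMSEQ[OF A0(3) k])
  have qconv: "\<exists>l. (\<lambda>n. es n q) \<longlonglongrightarrow> l" if "q \<in> \<rat>" for q
  proof -
    have "q \<in> range Q" using that by (subst Q)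
    then obtain i where qi: "q = Q i" by (rule rangeE)
    have "(\<lambda>n. es n q) = (\<lambda>n. \<eta> (r0 ((id \<circ> k) n)) (Q i))" by (simp add: fun_eq_iff es_def \<sigma>_def qi)
    then show ?thesis using kP[of i] unfolding Pd_def by simp
  qed
  have cauchy: "Cauchy (\<lambda>n. es n t)" for t
    unfolding Cauchy_def
  proof (intro allI impI)
    fix e :: real assume e: "e > 0"
    obtain q where q: "q \<in> \<rat>" "t < q" "q < t + e/3" using Rats_dense_in_real[of t "t + e/3"] e by auto
    obtain l where "(\<lambda>n. es n q) \<longlonglongrightarrow> l" using qconv[OF q(1)] by blast
    then have "Cauchy (\<lambda>n. es n q)" by (rule LIMSEQ_imp_Cauchy)
    moreover have e3: "e/3 > 0" using e by simp
    ultimately obtain N where N: "\<And>m n. m \<ge> N \<Longrightarrow> n \<ge> N \<Longrightarrow> dist (es m q) (es n q) < e/3"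
      unfolding Cauchy_def by blast
    show "\<exists>N. \<forall>m\<ge>N. \<forall>n\<ge>N. dist (es m t) (es n t) < e"
    proof (intro exI allI impI)
      fix m n assume mn: "m \<ge> N" "n \<ge> N"
      have "dist (es m t) (es n t) \<le> dist (es m t) (es m q) + dist (es m q) (es n t)" by (rule dist_triangle)
      also have "\<dots> \<le> dist (es m t) (es m q) + (dist (es m q) (es n q) + dist (es n q) (es n t))"
        using dist_triangle[of "es m q" "es n t" "es n q"] by simp
      also have "\<dots> < e/3 + (e/3 + e/3)"
      proof -
        have d1: "dist (es m t) (es m q) < e/3" using lip[of "\<sigma> m" t q] q unfolding es_def by linarith
        have d2: "dist (es n q) (es n t) < e/3" using lip[of "\<sigma> n" q t] q unfolding es_def by linarith
        show ?thesis using d1 d2 N[OF mn] by linarith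
      qed
      finally show "dist (es m t) (es n t) < e" by simp
    qed
  qed
  have "\<forall>t. \<exists>l. (\<lambda>n. es n t) \<longlonglongrightarrow> l"
  proof
    fix t
    have "\<forall>n. es n t \<in> K" using inK by (simp add: es_def)
    then show "\<exists>l. (\<lambda>n. es n t) \<longlonglongrightarrow> l"
    proof -
      have "\<exists>l\<in>K. (\<lambda>n. es n t) \<longlonglongrightarrow> l"
        using compact_imp_complete[OF Kc, unfolded complete_def, rule_format, of "\<lambda>n. es n t"] cauchy[of t] \<open>\<forall>n. es n t \<in> K\<close> by blast
      then show ?thesis by blast
    qed
  qed
  then obtain el where el: "\<And>t. (\<lambda>n. es n t) \<longlonglongrightarrow> el t" by metis
  have ellip: "dist (el s) (el t) \<le> \<bar>s - t\<bar>" for s t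
  proof (rule tendsto_upperbound[OF tendsto_dist[OF el el]])
    show "\<forall>\<^sub>F n in sequentially. dist (es n s) (es n t) \<le> \<bar>s - t\<bar>"
      unfolding es_def using lip by (intro always_eventually allI) 
  qed simp
  have el0: "el 0 = x0"
  proof -
    have "(\<lambda>n. es n 0) \<longlonglongrightarrow> x0"
    proof -
      have "(\<lambda>n. es n 0) = xs \<circ> \<sigma>" by (simp add: fun_eq_iff es_def st)
      then show ?thesis using LIMSEQ_subseq_LIMSEQ[OF xs \<sigma>] by simp
    qed
    then show ?thesis by (rule LIMSEQ_unique[OF el[of 0]])
  qed
  have A00: "0 \<le> A0" using A0(1) by simp
  have elF: "el A0 \<in> F"
  proof -
    have conv: "(\<lambda>n. es n (as n)) \<longlonglongrightarrow> el A0"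
      apply (rule tendsto_dist_iff[THEN iffD2])
    proof (rule tendsto_sandwich[of "\<lambda>_. 0" _ _ "\<lambda>n. \<bar>as n - A0\<bar> + dist (es n A0) (el A0)"])
      show "\<forall>\<^sub>F n in sequentially. 0 \<le> dist (es n (as n)) (el A0)" by simp
      show "\<forall>\<^sub>F n in sequentially. dist (es n (as n)) (el A0) \<le> \<bar>as n - A0\<bar> + dist (es n A0) (el A0)"
      proof (intro always_eventually allI)
        fix n
        have "dist (es n (as n)) (el A0) \<le> dist (es n (as n)) (es n A0) + dist (es n A0) (el A0)" by (rule dist_triangle)
        moreover have "dist (es n (as n)) (es n A0) \<le> \<bar>as n - A0\<bar>" unfolding es_def by (rule lip)
        ultimately show "dist (es n (as n)) (el A0) \<le> \<bar>as n - A0\<bar> + dist (es n A0) (el A0)"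
          by linarith
      qed
      show "((\<lambda>_. 0) \<longlongrightarrow> (0::real)) sequentially" by simp
      have "(\<lambda>n. \<bar>as n - A0\<bar>) \<longlonglongrightarrow> 0"
        using tendsto_rabs_zero[OF LIM_zero[OF as_lim]] .
      moreover have "(\<lambda>n. dist (es n A0) (el A0)) \<longlonglongrightarrow> 0" using tendsto_dist_iff[THEN iffD1, OF el[of A0]] .
      ultimately show "(\<lambda>n. \<bar>as n - A0\<bar> + dist (es n A0) (el A0)) \<longlonglongrightarrow> 0"
        using tendsto_add[of "\<lambda>n. \<bar>as n - A0\<bar>" 0 sequentially "\<lambda>n. dist (es n A0) (el A0)" 0] by simp
    qed
    have inF: "\<And>n. es n (as n) \<in> F" unfolding es_def as_def by (rule en)
    show ?thesis by (rule closed_sequentially[OF F inF conv])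
  qed
  define fn where "fn n t = \<rho> (es n t) * indicator {0..as n} t" for n t
  have fmeas: "fn n \<in> borel_measurable lborel" for n
  proof -
    have l1: "\<And>s t. dist (es n s) (es n t) \<le> \<bar>s - t\<bar>" unfolding es_def by (rule lip)
    have "(\<lambda>t. \<rho> (es n t)) \<in> borel_measurable borel" using lip_borel[OF l1 rho] .
    then have "(\<lambda>t. \<rho> (es n t) * indicator {0..as n} t) \<in> borel_measurable lborel" by simp
    moreover have "fn n = (\<lambda>t. \<rho> (es n t) * indicator {0..as n} t)" by (rule ext) (simp only: fn_def)
    ultimately show ?thesis by simp
  qed
  have point: "\<rho> (el t) * indicator {0..<A0} t \<le> liminf (\<lambda>n. fn n t)" for t
  proof (cases "t \<in> {0..<A0}")
    case True
    have ev: "\<forall>\<^sub>F n in sequentially. t < as n" using order_tendstoD(1)[OF as_lim] True by simp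
    have "\<rho> (el t) \<le> liminf (\<lambda>n. fn n t)"
      unfolding le_Liminf_iff
    proof (intro allI impI)
      fix z assume "z < \<rho> (el t)"
      then have "el t \<in> {x. z < \<rho> x}" by simp
      moreover have "open {x. z < \<rho> x}" using lsc by (simp add: lower_semicont_def)
      ultimately have "\<forall>\<^sub>F n in sequentially. es n t \<in> {x. z < \<rho> x}"
        using topological_tendstoD[OF el[of t]] by blast
      then show "\<forall>\<^sub>F n in sequentially. z < fn n t"
        using ev
      proof eventually_elim
        case (elim n)
        then show ?case using True by (simp add: fn_def split: split_indicator)
      qed
    qed
    then show ?thesis using True by simp
  qed simp
  have "Vf F \<rho> x0 \<le> (\<integral>\<^sup>+t. \<rho> (el t) * indicator {0..A0} t \<partial>lborel)"
    using V_le_lip[OF ellip A00 elF rho] el0 by simp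
  also have "\<dots> = (\<integral>\<^sup>+t. \<rho> (el t) * indicator {0..<A0} t \<partial>lborel)"
    by (intro nn_integral_cong_AE) (use AE_lborel_singleton[of A0] in \<open>eventually_elim, simp split: split_indicator\<close>)
  also have "\<dots> \<le> (\<integral>\<^sup>+t. liminf (\<lambda>n. fn n t) \<partial>lborel)"
    by (intro nn_integral_mono point)
  also have "\<dots> \<le> liminf (\<lambda>n. integral\<^sup>N lborel (fn n))"
    by (rule nn_integral_liminf[OF fmeas])
  also have "\<dots> \<le> ennreal b"
  proof (rule Liminf_le)
    show "\<forall>\<^sub>F n in sequentially. integral\<^sup>N lborel (fn n) \<le> ennreal b"
    proof (intro always_eventually allI)
      fix n
      have "fn n = (\<lambda>t. \<rho> (\<eta> (\<sigma> n) t) * indicator {0..a (\<sigma> n)} t)"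
        by (rule ext) (simp only: fn_def es_def as_def)
      then show "integral\<^sup>N lborel (fn n) \<le> ennreal b" using int[of "\<sigma> n"] by simp
    qed
  qed simp
  finally show ?thesis .
qed



lemma lsc_u:
  fixes \<rho> :: "'a::metric_space \<Rightarrow> ennreal"
  assumes proper: "proper_space TYPE('a)" and F: "closed F" and lsc: "lower_semicont \<rho>"
    and c: "c > 0" and cF: "\<forall>x. x \<notin> F \<longrightarrow> ennreal c \<le> \<rho> x"
  shows "lower_semicont (\<lambda>x. min 1 (Vf F \<rho> x))"
  unfolding lower_semicont_def
proof
  fix t :: ennreal
  have eq: "{x. t < min 1 (Vf F \<rho> x)} = - {x. min 1 (Vf F \<rho> x) \<le> t}" by (auto simp: not_le min_le_iff_disj)
  have "closed {x. min 1 (Vf F \<rho> x) \<le> t}"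
    unfolding closed_sequential_limits
  proof (intro allI impI, elim conjE)
    fix xs :: "nat \<Rightarrow> 'a" and x0
    assume h: "\<forall>n. xs n \<in> {x. min 1 (Vf F \<rho> x) \<le> t}" and xs: "xs \<longlonglongrightarrow> x0"
    have "min 1 (Vf F \<rho> x0) \<le> t"
    proof (rule ennreal_le_epsilon)
      fix e :: real assume tt: "t < top" and e: "0 < e"
      obtain r where r: "t = ennreal r" "0 \<le> r" using tt by (cases t) auto
      show "min 1 (Vf F \<rho> x0) \<le> t + ennreal e"
      proof (cases "1 \<le> ennreal (r + e)")
        case True
        then show ?thesis using r e by (simp add: ennreal_plus[symmetric] min.coboundedI1 del: ennreal_plus)
      next
        case False
        then have lt1: "ennreal (r + e) < 1" by simp
        have Vn: "Vf F \<rho> (xs n) < ennreal (r + e)" for n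
        proof (rule ccontr)
          assume "\<not> Vf F \<rho> (xs n) < ennreal (r + e)"
          then have "ennreal (r + e) \<le> Vf F \<rho> (xs n)" by simp
          then have "ennreal (r + e) \<le> min 1 (Vf F \<rho> (xs n))" using lt1 by simp
          also have "\<dots> \<le> ennreal r" using h r by simp
          finally show False using e r by (simp add: ennreal_le_iff2)
        qed
        have "Vf F \<rho> x0 \<le> ennreal (r + e)" by (rule limit_step[OF proper F lsc c cF xs Vn])
        then show ?thesis using r e by (simp add: ennreal_plus[symmetric] min.coboundedI2 del: ennreal_plus)
      qed
    qed
    then show "x0 \<in> {x. min 1 (Vf F \<rho> x) \<le> t}" by simp
  qed
  then show "open {x. t < min 1 (Vf F \<rho> x)}" unfolding eq by (rule open_Compl)
qed

lemma zero_on_F: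
  assumes "x \<in> F"
  shows "Vf F \<rho> x = 0"
proof -
  have arc: "arclength_curve (\<lambda>_. x) 0"
    unfolding arclength_curve_def
  proof (intro conjI allI impI)
    fix s t :: real assume "0 \<le> s" "s \<le> t" "t \<le> 0"
    then have st: "s = 0" "t = 0" by auto
    have "curve_length (\<lambda>_. x) 0 0 \<le> ennreal (0 - 0)" by (rule CL_lip) simp
    then show "curve_length (\<lambda>_. x) s t = ennreal (t - s)" using st by simp
  qed simp_all
  have "line_integral \<rho> (\<lambda>_. x) 0 = 0"
    by (simp add: line_integral_def nn_integral_cmult_indicator)
  moreover have "Vf F \<rho> x \<le> line_integral \<rho> (\<lambda>_. x) 0"
    unfolding Vf_def by (rule INF_lower2[of "((\<lambda>_. x), 0)"]) (use arc assms in auto)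
  ultimately show ?thesis by simp
qed

lemma ereal_bound:
  fixes ua ub J :: ennreal
  assumes "ua \<le> 1" "ub \<le> 1" "ua \<le> ub + J" "ub \<le> ua + J"
  shows "\<bar>enn2ereal ua - enn2ereal ub\<bar> \<le> enn2ereal J"
proof (cases "J = top")
  case True then show ?thesis by simp
next
  case False
  obtain j where j: "J = ennreal j" "0 \<le> j" using False by (cases J) auto
  have "ua \<noteq> top" "ub \<noteq> top" using assms(1,2) by (auto simp: top_unique)
  then obtain pa pb where p: "ua = ennreal pa" "0 \<le> pa" "ub = ennreal pb" "0 \<le> pb"
    by (metis ennreal_cases)
  have "pa \<le> pb + j" "pb \<le> pa + j"
    using assms(3,4) p j by (simp_all add: ennreal_plus[symmetric] ennreal_le_iff del: ennreal_plus)
  then show ?thesis using p j by (simp add: enn2ereal_ennreal abs_le_iff)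
qed



theorem lemma4p1:
  fixes F :: "'a::metric_space set" and \<rho> :: "'a \<Rightarrow> ennreal" and c :: real
    and u :: "'a \<Rightarrow> ennreal"
  assumes "proper_space TYPE('a)"
    and "closed F"
    and "lower_semicont \<rho>"
    and "c > 0"
    and "\<forall>x. x \<notin> F \<longrightarrow> ennreal c \<le> \<rho> x"
    and "\<forall>x. u x = min 1 (INF (\<gamma>, l) \<in> {(\<gamma>, l). arclength_curve \<gamma> l \<and> \<gamma> 0 = x \<and> \<gamma> l \<in> F}.
                                line_integral \<rho> \<gamma> l)"
  shows "lower_semicont u \<and> (\<forall>x\<in>F. u x = 0) \<and>
         upper_gradient (\<lambda>x. if x \<in> F then 0 else \<rho> x) (\<lambda>x. enn2ereal (u x))"
proof -
  have ueq: "u = (\<lambda>x. min 1 (Vf F \<rho> x))" using assms(6) by (simp add: fun_eq_iff Vf_def)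
  have rho: "\<rho> \<in> borel_measurable borel" by (rule lsc_borel[OF assms(3)])
  define g where "g = (\<lambda>x. if x \<in> F then 0 else \<rho> x)"
  have gm: "g \<in> borel_measurable borel"
    unfolding g_def by (rule measurable_If_set) (use rho assms(2) in auto)
  have P1: "lower_semicont u" unfolding ueq by (rule lsc_u[OF assms(1-5)])
  have P2: "\<forall>x\<in>F. u x = 0" unfolding ueq using zero_on_F[of _ F \<rho>] by simp
  have P3: "upper_gradient g (\<lambda>x. enn2ereal (u x))"
    unfolding upper_gradient_def
  proof (intro conjI allI impI gm)
    fix \<gamma> :: "real \<Rightarrow> 'a" and l :: real
    assume h: "arclength_curve \<gamma> l \<and> 0 < l"
    then have arc: "arclength_curve \<gamma> l" and l: "0 \<le> l" by auto
    have ll: "l \<in> {0..l}" using l by simp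
    define \<gamma>c where "\<gamma>c = (\<lambda>t. \<gamma> (max 0 (min l t)))"
    have c1: "dist (\<gamma>c s) (\<gamma>c t) \<le> \<bar>s - t\<bar>" for s t
      using clamp_curve(1)[OF arc ll] unfolding \<gamma>c_def by simp
    have c2: "\<gamma>c 0 = \<gamma> 0" using clamp_curve(2)[OF arc ll] unfolding \<gamma>c_def by simp
    have c3: "\<gamma>c t = \<gamma> t" if "t \<in> {0..l}" for t using clamp_curve(3)[OF arc ll that] unfolding \<gamma>c_def by simp
    have cl: "\<gamma>c l = \<gamma> l" using c3 l by simp
    define J where "J = line_integral g \<gamma> l"
    have J1: "J = (\<integral>\<^sup>+t. g (\<gamma>c t) * indicator {0..l} t \<partial>lborel)"
      unfolding J_def line_integral_def by (intro nn_integral_cong) (simp add: c3 split: split_indicator)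
    have a1: "u (\<gamma> 0) \<le> u (\<gamma> l) + J"
      using UG1[OF c1 l assms(2) rho] unfolding ueq J1 g_def by (simp add: c2 cl)
    define \<gamma>r where "\<gamma>r = (\<lambda>t. \<gamma>c (l - t))"
    have r1: "dist (\<gamma>r s) (\<gamma>r t) \<le> \<bar>s - t\<bar>" for s t
      using c1[of "l - s" "l - t"] unfolding \<gamma>r_def by simp
    have J2: "J = (\<integral>\<^sup>+t. g (\<gamma>r t) * indicator {0..l} t \<partial>lborel)"
    proof -
      have meas: "(\<lambda>t. g (\<gamma>r t) * indicator {0..l} t) \<in> borel_measurable borel"
        using lip_borel[OF r1 gm] by simp
      have "(\<integral>\<^sup>+t. g (\<gamma>r t) * indicator {0..l} t \<partial>lborel)
          = ennreal \<bar>-1\<bar> * (\<integral>\<^sup>+x. g (\<gamma>r (l + (-1) * x)) * indicator {0..l} (l + (-1) * x) \<partial>lborel)"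
        by (rule nn_integral_real_affine[OF meas]) simp
      also have "\<dots> = (\<integral>\<^sup>+x. g (\<gamma>c x) * indicator {0..l} x \<partial>lborel)"
        by (simp add: \<gamma>r_def) (intro nn_integral_cong, simp split: split_indicator)
      finally show ?thesis using J1 by simp
    qed
    have a2: "u (\<gamma> l) \<le> u (\<gamma> 0) + J"
      using UG1[OF r1 l assms(2) rho] unfolding ueq J2 g_def by (simp add: \<gamma>r_def c2 cl)
    have b1: "u (\<gamma> 0) \<le> 1" "u (\<gamma> l) \<le> 1" unfolding ueq by simp_all
    have fin: "\<bar>enn2ereal (u x)\<bar> \<noteq> \<infinity>" for x
    proof -
      have "u x \<le> 1" unfolding ueq by simp
      then have "u x \<noteq> top" by (auto simp: top_unique)
      then obtain r where "u x = ennreal r" "0 \<le> r" by (cases "u x") auto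
      then show ?thesis by (simp add: enn2ereal_ennreal)
    qed
    show "if \<bar>enn2ereal (u (\<gamma> 0))\<bar> \<noteq> \<infinity> \<and> \<bar>enn2ereal (u (\<gamma> l))\<bar> \<noteq> \<infinity>
         then \<bar>enn2ereal (u (\<gamma> 0)) - enn2ereal (u (\<gamma> l))\<bar> \<le> enn2ereal (line_integral g \<gamma> l)
         else line_integral g \<gamma> l = \<infinity>"
      using ereal_bound[OF b1 a1 a2] fin unfolding J_def by simp
  qed
  show ?thesis using P1 P2 P3 unfolding g_def by blast
qed

end
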